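(* Let $\gamma > 1.755$ and let $I$ be a $\gamma$-stable instance of the metric Steiner tree problem with optimal Steiner tree $\mathrm{OPT}$, such that no two Steiner points are adjacent in $\mathrm{OPT}$. Let $H$ be a subgraph of $\mathrm{OPT}$. Suppose $T(a, \bar b)$, with $\bar b = (b_1, \ldots, b_m)$, is a terminal component fan relative to $H$ such that: (i) the average weight of $T(a, \bar b)$ is less than the weight of every edge not in $H$ that connects two distinct terminal components of $H$; (ii) the average weight of $T(a, \bar b)$ is minimal among the average weights of all terminal component fans relative to $H$; (iii) the edges of $T(a, \bar b)$ are all within a factor of $\frac{1}{\gamma - 1}$ of each other, i.e. $w_{ab_i} \le \frac{1}{\gamma - 1} w_{ab_j}$ for all $i, j$. Then $T(a, \bar b)$ is a subgraph of $\mathrm{OPT}$, i.e. $ab_i$ is an edge of $\mathrm{OPT}$ for every $i$.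
   Context: An instance of the metric Steiner tree problem consists of a finite set $V$ of points of a metric space with metric $d$, a set $T \subseteq V$ of terminals, and the complete graph on $V$ with edge weights $w_{uv} = d(u,v)$. Points of $V \setminus T$ are Steiner points. A Steiner tree is a tree in this complete graph whose vertex set contains all of $T$; its weight is the sum of its edge weights. For $\gamma > 1$, the instance is $\gamma$-stable if it has a minimum-weight Steiner tree $\mathrm{OPT}$ such that for every $w' : V \times V \to \mathbb{R}_{\ge 0}$ with $w_{uv} \le w'_{uv} \le \gamma w_{uv}$ for all $u,v$, every minimum-weight Steiner tree with respect to $w'$ equals $\mathrm{OPT}$. For vertices $a$ and $\bar b = (b_1, \ldots, b_m)$ with $m \ge 2$, $T(a, \bar b)$ denotes the star on vertex set $\{a, b_1, \ldots, b_m\}$ with edges $ab_1, \ldots, ab_m$; its average weight is $\frac{\sum_{i=1}^m w_{ab_i}}{m - 1}$. For a subgraph $H$ of $\mathrm{OPT}$, the terminal components of $H$ are the connected components of $H$ together with the terminals not in $V(H)$ (each as a singleton). $T(a, \bar b)$ is a terminal component fan relative to $H$ if $a$ is a Steiner point and each $b_i$ is either a terminal or a vertex of a connected component of $H$ having at least two vertices, with the $b_i$ lying in pairwise distinct terminal components of $H$. *)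

theory Defs
  imports "HOL-Analysis.Analysis"
begin

text \<open>Graphs in the complete graph on a point set: a graph is a pair (S, E) of a vertex set
  and a set of edges, each edge being a two-element set {u, v} with u \<noteq> v.\<close>

definition adj :: "'a set set \<Rightarrow> 'a \<Rightarrow> 'a \<Rightarrow> bool" where
  "adj E x y \<longleftrightarrow> x \<noteq> y \<and> {x, y} \<in> E"

definition is_tree :: "'a set \<Rightarrow> 'a set set \<Rightarrow> bool" where
  "is_tree S E \<longleftrightarrow> finite S \<and> S \<noteq> {} \<and>
     (\<forall>e\<in>E. \<exists>u v. e = {u, v} \<and> u \<noteq> v \<and> u \<in> S \<and> v \<in> S) \<and>
     (\<forall>u\<in>S. \<forall>v\<in>S. (adj E)\<^sup>*\<^sup>* u v) \<and>
     card E + 1 = card S"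

definition steiner_tree :: "'a set \<Rightarrow> 'a set \<Rightarrow> 'a set \<times> 'a set set \<Rightarrow> bool" where
  "steiner_tree V T X \<longleftrightarrow> T \<subseteq> fst X \<and> fst X \<subseteq> V \<and> is_tree (fst X) (snd X)"

definition edist :: "'a::metric_space set \<Rightarrow> real" where
  "edist e = (THE r. \<exists>u v. e = {u, v} \<and> r = dist u v)"

definition min_steiner :: "'a set \<Rightarrow> 'a set \<Rightarrow> ('a set \<Rightarrow> real) \<Rightarrow> 'a set \<times> 'a set set \<Rightarrow> bool" where
  "min_steiner V T w X \<longleftrightarrow> steiner_tree V T X \<and>
     (\<forall>Y. steiner_tree V T Y \<longrightarrow> sum w (snd X) \<le> sum w (snd Y))"

definition perturbation :: "real \<Rightarrow> 'a::metric_space set \<Rightarrow> ('a set \<Rightarrow> real) \<Rightarrow> bool" where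
  "perturbation \<gamma> V w' \<longleftrightarrow>
     (\<forall>u\<in>V. \<forall>v\<in>V. u \<noteq> v \<longrightarrow> dist u v \<le> w' {u, v} \<and> w' {u, v} \<le> \<gamma> * dist u v)"

definition stable_with_opt :: "real \<Rightarrow> 'a::metric_space set \<Rightarrow> 'a set \<Rightarrow> 'a set \<times> 'a set set \<Rightarrow> bool" where
  "stable_with_opt \<gamma> V T OPT \<longleftrightarrow> min_steiner V T edist OPT \<and>
     (\<forall>w'. perturbation \<gamma> V w' \<longrightarrow> (\<forall>X. min_steiner V T w' X \<longrightarrow> X = OPT))"

definition subgraph :: "'a set \<Rightarrow> 'a set set \<Rightarrow> 'a set \<times> 'a set set \<Rightarrow> bool" where
  "subgraph VH EH G \<longleftrightarrow> VH \<subseteq> fst G \<and> EH \<subseteq> snd G \<and> (\<forall>e\<in>EH. e \<subseteq> VH)"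

definition comp :: "'a set \<Rightarrow> 'a set set \<Rightarrow> 'a \<Rightarrow> 'a set" where
  "comp VH EH x = {y \<in> VH. (adj EH)\<^sup>*\<^sup>* x y}"

text \<open>Terminal component of H containing x (meaningful for x \<in> VH \<union> T).\<close>
definition tcomp :: "'a set \<Rightarrow> 'a set \<Rightarrow> 'a set set \<Rightarrow> 'a \<Rightarrow> 'a set" where
  "tcomp T VH EH x = (if x \<in> VH then comp VH EH x else {x})"

definition avg_weight :: "'a::metric_space \<Rightarrow> 'a list \<Rightarrow> real" where
  "avg_weight a b = (\<Sum>i<length b. dist a (b ! i)) / (real (length b) - 1)"

definition tc_fan :: "'a set \<Rightarrow> 'a set \<Rightarrow> 'a set \<Rightarrow> 'a set set \<Rightarrow> 'a \<Rightarrow> 'a list \<Rightarrow> bool" where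
  "tc_fan V T VH EH a b \<longleftrightarrow>
     a \<in> V - T \<and> length b \<ge> 2 \<and> set b \<subseteq> V \<and> a \<notin> set b \<and>
     (\<forall>i<length b. b ! i \<in> T \<or> (b ! i \<in> VH \<and> card (comp VH EH (b ! i)) \<ge> 2)) \<and>
     (\<forall>i<length b. \<forall>j<length b. i \<noteq> j \<longrightarrow> tcomp T VH EH (b ! i) \<noteq> tcomp T VH EH (b ! j))"

end

theory Submission
  imports Defs
begin

lemma adj_sym: "adj E x y = adj E y x"
  unfolding adj_def by (auto simp: insert_commute)

lemma reach_sym: "(adj E)\<^sup>*\<^sup>* x y \<Longrightarrow> (adj E)\<^sup>*\<^sup>* y x"
proof (induction rule: rtranclp_induct)
  case base then show ?case by simp
next
  case (step y z)
  then show ?case using adj_sym by (metis converse_rtranclp_into_rtranclp)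
qed

lemma adj_mono: "E \<subseteq> E' \<Longrightarrow> adj E x y \<Longrightarrow> adj E' x y"
  unfolding adj_def by auto

lemma reach_mono: assumes "E \<subseteq> E'" "(adj E)\<^sup>*\<^sup>* x y" shows "(adj E')\<^sup>*\<^sup>* x y"
  using assms(2) by (induction rule: rtranclp_induct) (auto intro: rtranclp.rtrancl_into_rtrancl adj_mono[OF assms(1)])

lemma edist_eq: "edist {u, v} = dist u v"
  unfolding edist_def
  by (rule the_equality) (auto simp: doubleton_eq_iff dist_commute)

lemma crossing_edge:
  assumes "(adj E)\<^sup>*\<^sup>* x y" "x \<in> R" "y \<notin> R"
  shows "\<exists>u v. adj E u v \<and> u \<in> R \<and> v \<notin> R"
  using assms by (induction rule: rtranclp_induct) auto

definition edges_in :: "'a set \<Rightarrow> 'a set set \<Rightarrow> bool" where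
  "edges_in S E \<longleftrightarrow> (\<forall>e\<in>E. \<exists>u v. e = {u, v} \<and> u \<noteq> v \<and> u \<in> S \<and> v \<in> S)"

definition connected_on :: "'a set \<Rightarrow> 'a set set \<Rightarrow> bool" where
  "connected_on S E \<longleftrightarrow> (\<forall>u\<in>S. \<forall>v\<in>S. (adj E)\<^sup>*\<^sup>* u v)"

lemma is_tree_iff: "is_tree S E \<longleftrightarrow> finite S \<and> S \<noteq> {} \<and> edges_in S E \<and> connected_on S E \<and> card E + 1 = card S"
  unfolding is_tree_def edges_in_def connected_on_def by blast

lemma edges_in_finite: "finite S \<Longrightarrow> edges_in S E \<Longrightarrow> finite E"
proof -
  assume "finite S" "edges_in S E"
  then have "E \<subseteq> Pow S" unfolding edges_in_def by auto
  then show "finite E" using \<open>finite S\<close> finite_subset by blast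
qed

lemma adj_in: "edges_in S E \<Longrightarrow> adj E x y \<Longrightarrow> x \<in> S \<and> y \<in> S"
  unfolding edges_in_def adj_def by (auto simp: doubleton_eq_iff)

lemma grow_tree:
  assumes fin: "finite S" and ed: "edges_in S E" and con: "connected_on S E"
    and k: "1 \<le> k" "k \<le> card S"
  shows "\<exists>R F. R \<subseteq> S \<and> card R = k \<and> F \<subseteq> E \<and> is_tree R F"
  using k
proof (induction k)
  case 0 then show ?case by simp
next
  case (Suc k)
  show ?case
  proof (cases "k = 0")
    case True
    then have "S \<noteq> {}" using Suc by auto
    then obtain x where "x \<in> S" by auto
    then show ?thesis
      apply (intro exI[of _ "{x}"] exI[of _ "{}"])
      using True by (auto simp: is_tree_def)
  next
    case False
    then obtain R F where RF: "R \<subseteq> S" "card R = k" "F \<subseteq> E" "is_tree R F"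
      using Suc by auto
    have "R \<noteq> {}" using RF False by auto
    then obtain x where x: "x \<in> R" by auto
    have "card R < card S" using RF Suc by auto
    then obtain y where y: "y \<in> S" "y \<notin> R" using RF by (metis subsetI psubsetI psubset_card_mono fin card_mono less_le_not_le subset_antisym)
    have "(adj E)\<^sup>*\<^sup>* x y" using con x y RF unfolding connected_on_def by auto
    then obtain u v where uv: "adj E u v" "u \<in> R" "v \<notin> R"
      using crossing_edge x y by metis
    have vS: "v \<in> S" using adj_in[OF ed uv(1)] by auto
    define R' where "R' = insert v R"
    define F' where "F' = insert {u, v} F"
    have tr: "finite R" "R \<noteq> {}" "edges_in R F" "connected_on R F" "card F + 1 = card R"
      using RF(4) unfolding is_tree_iff by auto
    have notin: "{u, v} \<notin> F" using tr(3) uv unfolding edges_in_def by (auto simp: doubleton_eq_iff)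
    have finF: "finite F" using edges_in_finite tr by auto
    have "card F' + 1 = card R'" unfolding F'_def R'_def using notin finF tr uv by auto
    moreover have "edges_in R' F'" using tr(3) uv unfolding edges_in_def R'_def F'_def adj_def by blast
    moreover have "connected_on R' F'"
    proof -
      have sub: "F \<subseteq> F'" unfolding F'_def by auto
      have a1: "\<forall>w\<in>R. (adj F')\<^sup>*\<^sup>* u w" using tr(4) uv(2) reach_mono[OF sub] unfolding connected_on_def by blast
      have a2: "adj F' u v" using uv unfolding adj_def F'_def by auto
      have "\<forall>w\<in>R'. (adj F')\<^sup>*\<^sup>* u w" using a1 a2 unfolding R'_def by auto
      then show ?thesis unfolding connected_on_def
        by (meson reach_sym rtranclp_trans)
    qed
    ultimately have "is_tree R' F'" using tr unfolding is_tree_iff R'_def by auto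
    moreover have "R' \<subseteq> S" "card R' = Suc k" "F' \<subseteq> E"
      using RF vS uv tr(1) unfolding R'_def F'_def adj_def by auto
    ultimately show ?thesis by blast
  qed
qed

lemma spanning_tree:
  assumes "finite S" "S \<noteq> {}" "edges_in S E" "connected_on S E"
  shows "\<exists>F\<subseteq>E. is_tree S F"
proof -
  have "1 \<le> card S" using assms by (simp add: Suc_leI card_gt_0_iff)
  then obtain R F where RF: "R \<subseteq> S" "card R = card S" "F \<subseteq> E" "is_tree R F"
    using grow_tree[OF assms(1,3,4)] by blast
  then have "R = S" using assms(1) by (metis card_subset_eq)
  then show ?thesis using RF by blast
qed

lemma conn_card:
  assumes "finite S" "S \<noteq> {}" "edges_in S E" "connected_on S E"
  shows "card S \<le> card E + 1"
proof -
  obtain F where F: "F \<subseteq> E" "is_tree S F" using spanning_tree[OF assms] by blast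
  have "finite E" using edges_in_finite assms by auto
  then have "card F \<le> card E" using F card_mono by auto
  then show ?thesis using F unfolding is_tree_def by auto
qed

lemma side_lemma:
  assumes "(adj E)\<^sup>*\<^sup>* z w"
  shows "(adj (E - {{c,d}}))\<^sup>*\<^sup>* z w \<or> (adj (E - {{c,d}}))\<^sup>*\<^sup>* c w \<or> (adj (E - {{c,d}}))\<^sup>*\<^sup>* d w"
  using assms
proof (induction rule: rtranclp_induct)
  case base then show ?case by simp
next
  case (step y x)
  show ?case
  proof (cases "{y, x} = {c, d}")
    case True
    then have "x = c \<or> x = d" by blast
    then show ?thesis by blast
  next
    case False
    then have "adj (E - {{c,d}}) y x" using step(2) unfolding adj_def by blast
    then show ?thesis using step(3) rtranclp.rtrancl_into_rtrancl[of "adj (E - {{c,d}})" _ y x] by blast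
  qed
qed

lemma conn_from:
  assumes "\<forall>w\<in>S. (adj E)\<^sup>*\<^sup>* x w" shows "connected_on S E"
  unfolding connected_on_def
proof (intro ballI)
  fix u v assume "u \<in> S" "v \<in> S"
  then have "(adj E)\<^sup>*\<^sup>* x u" "(adj E)\<^sup>*\<^sup>* x v" using assms by auto
  then have "(adj E)\<^sup>*\<^sup>* u x" "(adj E)\<^sup>*\<^sup>* x v" using reach_sym by auto
  then show "(adj E)\<^sup>*\<^sup>* u v" by (rule rtranclp_trans)
qed

lemma edge_in: "edges_in S E \<Longrightarrow> {x, y} \<in> E \<Longrightarrow> x \<in> S \<and> y \<in> S"
  unfolding edges_in_def by (metis doubleton_eq_iff)

lemma edges_in_mono: "E' \<subseteq> E \<Longrightarrow> edges_in S E \<Longrightarrow> edges_in S E'"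
  unfolding edges_in_def by (simp add: subset_eq)

lemma tree_cycle:
  assumes tr: "is_tree S E" and e: "{x, y} \<in> E" "x \<noteq> y"
    and r: "(adj (E - {{x, y}}))\<^sup>*\<^sup>* x y"
  shows False
proof -
  have t: "finite S" "S \<noteq> {}" "edges_in S E" "connected_on S E" "card E + 1 = card S"
    using tr unfolding is_tree_iff by auto
  have xS: "x \<in> S" using edge_in[OF t(3) e(1)] by blast
  have "connected_on S (E - {{x,y}})"
  proof -
    have "\<forall>w\<in>S. (adj (E - {{x,y}}))\<^sup>*\<^sup>* x w"
    proof
      fix w assume "w \<in> S"
      then have "(adj E)\<^sup>*\<^sup>* x w" using t(4) xS unfolding connected_on_def by auto
      then have "(adj (E - {{x,y}}))\<^sup>*\<^sup>* x w \<or> (adj (E - {{x,y}}))\<^sup>*\<^sup>* y w"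
        using side_lemma[of E x w x y] by blast
      then show "(adj (E - {{x,y}}))\<^sup>*\<^sup>* x w"
      proof
        assume "(adj (E - {{x,y}}))\<^sup>*\<^sup>* y w"
        with r show ?thesis by (rule rtranclp_trans)
      qed
    qed
    then show ?thesis by (rule conn_from)
  qed
  moreover have "edges_in S (E - {{x,y}})" using edges_in_mono[OF _ t(3), of "E - {{x,y}}"] by blast
  ultimately have "card S \<le> card (E - {{x,y}}) + 1" using conn_card t(1,2) by blast
  moreover have "finite E" using edges_in_finite t by auto
  moreover have "card (E - {{x,y}}) = card E - 1" using e \<open>finite E\<close> by simp
  moreover have "card E > 0" using e \<open>finite E\<close> card_gt_0_iff by blast
  ultimately have "card S \<le> card E" by linarith
  then show False using t(5) by linarith
qed
definition walk :: "'a set set \<Rightarrow> (nat \<Rightarrow> 'a) \<Rightarrow> nat \<Rightarrow> bool" where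
  "walk E p n \<longleftrightarrow> (\<forall>i<n. adj E (p i) (p (Suc i)))"

lemma reach_walk:
  assumes "(adj E)\<^sup>*\<^sup>* u v"
  shows "\<exists>p n. p 0 = u \<and> p n = v \<and> walk E p n"
  using assms
proof (induction rule: rtranclp_induct)
  case base
  then show ?case by (intro exI[of _ "\<lambda>_. u"] exI[of _ 0]) (auto simp: walk_def)
next
  case (step y z)
  then obtain p n where p: "p 0 = u" "p n = y" "walk E p n" by auto
  have "walk E (p(Suc n := z)) (Suc n)" unfolding walk_def
  proof (intro allI impI)
    fix i assume "i < Suc n"
    then show "adj E ((p(Suc n := z)) i) ((p(Suc n := z)) (Suc i))"
      using p step(2) unfolding walk_def by (cases "i = n") auto
  qed
  moreover have "(p(Suc n := z)) 0 = u" "(p(Suc n := z)) (Suc n) = z" using p by auto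
  ultimately show ?case by blast
qed
lemma walk_reach_gen:
  assumes "\<And>k. i \<le> k \<Longrightarrow> k < j \<Longrightarrow> adj E (p k) (p (Suc k))" "i \<le> j"
  shows "(adj E)\<^sup>*\<^sup>* (p i) (p j)"
  using assms(2,1)
proof (induction j)
  case 0 then show ?case by simp
next
  case (Suc j)
  show ?case
  proof (cases "i = Suc j")
    case True then show ?thesis by simp
  next
    case False
    then have "i \<le> j" using Suc by auto
    then have "(adj E)\<^sup>*\<^sup>* (p i) (p j)" using Suc by auto
    moreover have "adj E (p j) (p (Suc j))" using Suc.prems \<open>i \<le> j\<close> by auto
    ultimately show ?thesis by (rule rtranclp.rtrancl_into_rtrancl)
  qed
qed

definition swalk :: "'a set set \<Rightarrow> (nat \<Rightarrow> 'a) \<Rightarrow> nat \<Rightarrow> bool" where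
  "swalk E p n \<longleftrightarrow> walk E p n \<and> inj_on p {0..n}"

lemma reach_swalk:
  assumes "(adj E)\<^sup>*\<^sup>* u v"
  shows "\<exists>p n. p 0 = u \<and> p n = v \<and> swalk E p n"
proof -
  define P where "P n \<longleftrightarrow> (\<exists>p. p 0 = u \<and> p n = v \<and> walk E p n)" for n
  have "\<exists>n. P n" using reach_walk[OF assms] unfolding P_def by auto
  then obtain n where n: "P n" and least: "\<And>m. P m \<Longrightarrow> n \<le> m"
    by (metis ex_has_least_nat)
  then obtain p where p: "p 0 = u" "p n = v" "walk E p n" unfolding P_def by auto
  have "inj_on p {0..n}"
  proof (rule ccontr)
    assume "\<not> inj_on p {0..n}"
    then obtain i j where ij: "i < j" "j \<le> n" "p i = p j"
      unfolding inj_on_def by (metis atLeastAtMost_iff linorder_neqE_nat)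
    define q where "q k = (if k \<le> i then p k else p (k + (j - i)))" for k
    have "q 0 = u" using p unfolding q_def by auto
    moreover have "q (n - (j - i)) = v"
    proof (cases "j = n")
      case True then show ?thesis using p ij unfolding q_def by auto
    next
      case False then show ?thesis using p ij unfolding q_def by auto
    qed
    moreover have "walk E q (n - (j - i))"
      unfolding walk_def
    proof (intro allI impI)
      fix k assume k: "k < n - (j - i)"
      show "adj E (q k) (q (Suc k))"
      proof (cases "k < i")
        case True then show ?thesis using p(3) ij k unfolding walk_def q_def by auto
      next
        case False
        then have "adj E (p (k + (j - i))) (p (Suc (k + (j - i))))"
          using p(3) k ij unfolding walk_def by auto
        then show ?thesis using False ij unfolding q_def by (auto simp: not_less)
      qed
    qed
    ultimately have "P (n - (j - i))" unfolding P_def by blast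
    then show False using least ij by fastforce
  qed
  then show ?thesis using p unfolding swalk_def by blast
qed

lemma swalk_avoid:
  assumes sw: "swalk E p n" and i: "i < n"
  shows "(adj (E - {{p i, p (Suc i)}}))\<^sup>*\<^sup>* (p 0) (p i)"
    and "(adj (E - {{p i, p (Suc i)}}))\<^sup>*\<^sup>* (p (Suc i)) (p n)"
proof -
  have inj: "inj_on p {0..n}" and w: "walk E p n" using sw unfolding swalk_def by auto
  have injD: "k = k'" if "k \<le> n" "k' \<le> n" "p k = p k'" for k k'
    using inj that unfolding inj_on_def by auto
  have neq: "{p k, p (Suc k)} \<noteq> {p i, p (Suc i)}" if "k < n" "k \<noteq> i" for k
  proof
    assume eq: "{p k, p (Suc k)} = {p i, p (Suc i)}"
    have "p k \<in> {p i, p (Suc i)}" using eq by blast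
    then have "p k = p i \<or> p k = p (Suc i)" by blast
    then have "k = i \<or> k = Suc i" using injD[of k i] injD[of k "Suc i"] that i by auto
    then have ks: "k = Suc i" using that by auto
    have "p (Suc k) \<in> {p i, p (Suc i)}" using eq by blast
    then have "p (Suc k) = p i \<or> p (Suc k) = p (Suc i)" by blast
    then have "Suc k = i \<or> Suc k = Suc i" using injD[of "Suc k" i] injD[of "Suc k" "Suc i"] that i by auto
    then show False using ks by auto
  qed
  have step: "adj (E - {{p i, p (Suc i)}}) (p k) (p (Suc k))" if "k < n" "k \<noteq> i" for k
    using w neq[OF that] that unfolding walk_def adj_def by auto
  show "(adj (E - {{p i, p (Suc i)}}))\<^sup>*\<^sup>* (p 0) (p i)"
    by (rule walk_reach_gen) (use step i in auto)
  show "(adj (E - {{p i, p (Suc i)}}))\<^sup>*\<^sup>* (p (Suc i)) (p n)"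
    by (rule walk_reach_gen) (use step i in auto)
qed

lemma exchange_conn:
  assumes con: "connected_on S E" and sw: "swalk E p n" and i: "i < n"
    and pS: "p 0 \<in> S" "p n \<in> S" "p i \<in> S"
  shows "connected_on S ((E - {{p i, p (Suc i)}}) \<union> {{p 0, p n}})"
proof -
  define E' where "E' = (E - {{p i, p (Suc i)}}) \<union> {{p 0, p n}}"
  have sub: "E - {{p i, p (Suc i)}} \<subseteq> E'" unfolding E'_def by auto
  have a1: "(adj E')\<^sup>*\<^sup>* (p 0) (p i)" using swalk_avoid(1)[OF sw i] reach_mono[OF sub] by blast
  have a2: "(adj E')\<^sup>*\<^sup>* (p (Suc i)) (p n)" using swalk_avoid(2)[OF sw i] reach_mono[OF sub] by blast
  have a3: "(adj E')\<^sup>*\<^sup>* (p 0) (p n)"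
  proof (cases "p 0 = p n")
    case True then show ?thesis by simp
  next
    case False
    then have "adj E' (p 0) (p n)" unfolding adj_def E'_def by auto
    then show ?thesis by auto
  qed
  have "(adj E')\<^sup>*\<^sup>* (p n) (p (Suc i))" using a2 by (rule reach_sym)
  with a3 have a4: "(adj E')\<^sup>*\<^sup>* (p 0) (p (Suc i))" by (rule rtranclp_trans)
  have "\<forall>w\<in>S. (adj E')\<^sup>*\<^sup>* (p 0) w"
  proof
    fix w assume "w \<in> S"
    then have "(adj E)\<^sup>*\<^sup>* (p i) w" using con pS unfolding connected_on_def by auto
    then have "(adj (E - {{p i, p (Suc i)}}))\<^sup>*\<^sup>* (p i) w \<or> (adj (E - {{p i, p (Suc i)}}))\<^sup>*\<^sup>* (p (Suc i)) w"
      using side_lemma[of E "p i" w "p i" "p (Suc i)"] by blast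
    then have "(adj E')\<^sup>*\<^sup>* (p i) w \<or> (adj E')\<^sup>*\<^sup>* (p (Suc i)) w" using reach_mono[OF sub] by blast
    then show "(adj E')\<^sup>*\<^sup>* (p 0) w"
    proof
      assume "(adj E')\<^sup>*\<^sup>* (p i) w" with a1 show ?thesis by (rule rtranclp_trans)
    next
      assume "(adj E')\<^sup>*\<^sup>* (p (Suc i)) w" with a4 show ?thesis by (rule rtranclp_trans)
    qed
  qed
  then show ?thesis unfolding E'_def by (rule conn_from)
qed

lemma edist_nonneg: "edges_in S E \<Longrightarrow> e \<in> E \<Longrightarrow> edist e \<ge> 0"
  unfolding edges_in_def using edist_eq by (metis zero_le_dist)

lemma steiner_edges: "steiner_tree V T X \<Longrightarrow> edges_in (fst X) (snd X) \<and> finite (fst X) \<and> connected_on (fst X) (snd X)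
   \<and> card (snd X) + 1 = card (fst X) \<and> T \<subseteq> fst X \<and> fst X \<subseteq> V \<and> fst X \<noteq> {}"
  unfolding steiner_tree_def is_tree_iff by blast

lemma finite_steiner:
  assumes "finite V" shows "finite {X. steiner_tree V T X}"
proof -
  have "{X. steiner_tree V T X} \<subseteq> Pow V \<times> Pow (Pow V)"
  proof
    fix X assume "X \<in> {X. steiner_tree V T X}"
    then have st: "steiner_tree V T X" by simp
    then have ed: "edges_in (fst X) (snd X)" and sub: "fst X \<subseteq> V" using steiner_edges[OF st] by auto
    have "snd X \<subseteq> Pow V"
    proof
      fix e assume "e \<in> snd X"
      then obtain u v where "e = {u, v}" "u \<in> fst X" "v \<in> fst X" using ed unfolding edges_in_def by blast
      then show "e \<in> Pow V" using sub by auto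
    qed
    then show "X \<in> Pow V \<times> Pow (Pow V)" using sub by (simp add: mem_Times_iff)
  qed
  moreover have "finite (Pow V \<times> Pow (Pow V))" using assms by simp
  ultimately show ?thesis by (rule finite_subset)
qed

lemma CL:
  fixes V T :: "'a::metric_space set" and OPT :: "'a set \<times> 'a set set" and \<gamma> :: real
  assumes stab: "stable_with_opt \<gamma> V T OPT" and finV: "finite V" and g1: "\<gamma> \<ge> 1"
    and G: "T \<subseteq> SG" "SG \<subseteq> V" "SG \<noteq> {}" "edges_in SG EG" "connected_on SG EG"
    and ne: "snd OPT - EG \<noteq> {}"
    and w: "sum edist (EG - snd OPT) \<le> \<gamma> * sum edist (snd OPT - EG)"
  shows False
proof -
  have finSG: "finite SG" using finV G(2) finite_subset by blast
  obtain F where F: "F \<subseteq> EG" "is_tree SG F" using spanning_tree[OF finSG G(3,4,5)] by blast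
  define X where "X = (SG, F)"
  have stX: "steiner_tree V T X" unfolding steiner_tree_def X_def using F G by auto
  define w' where "w' e = (if e \<in> EG then 1 else \<gamma>) * edist e" for e
  have le: "x \<le> \<gamma> * x" if "x \<ge> 0" for x :: real
    using mult_right_mono[OF g1 that] by simp
  have pert: "perturbation \<gamma> V w'"
    unfolding perturbation_def w'_def using le g1 by (auto simp: edist_eq)
  have opt: "min_steiner V T edist OPT" using stab unfolding stable_with_opt_def by auto
  define E where "E = snd OPT"
  have stO: "steiner_tree V T OPT" using opt unfolding min_steiner_def by auto
  have edE: "edges_in (fst OPT) E" and finO: "finite (fst OPT)" using steiner_edges[OF stO] E_def by auto
  have finE: "finite E" using edges_in_finite[OF finO edE] .
  have finEG: "finite EG" using edges_in_finite[OF finSG G(4)] .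
  have nnEG: "edist e \<ge> 0" if "e \<in> EG" for e using edist_nonneg[OF G(4) that] .
  have s1: "sum w' F \<le> sum w' EG"
    by (rule sum_mono2[OF finEG F(1)]) (use nnEG in \<open>auto simp: w'_def\<close>)
  have s2: "sum w' EG = sum edist (EG \<inter> E) + sum edist (EG - E)"
  proof -
    have "sum w' EG = sum edist EG" by (rule sum.cong) (auto simp: w'_def)
    also have "\<dots> = sum edist (EG \<inter> E) + sum edist (EG - E)" using sum.Int_Diff[OF finEG] by blast
    finally show ?thesis .
  qed
  have s3: "sum w' E = sum edist (E \<inter> EG) + \<gamma> * sum edist (E - EG)"
  proof -
    have "sum w' E = sum w' (E \<inter> EG) + sum w' (E - EG)" using sum.Int_Diff[OF finE] by blast
    moreover have "sum w' (E \<inter> EG) = sum edist (E \<inter> EG)" by (rule sum.cong) (auto simp: w'_def)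
    moreover have "sum w' (E - EG) = \<gamma> * sum edist (E - EG)"
      unfolding sum_distrib_left by (rule sum.cong) (auto simp: w'_def)
    ultimately show ?thesis by simp
  qed
  have "EG \<inter> E = E \<inter> EG" by blast
  then have key: "sum w' F \<le> sum w' E" using s1 s2 s3 w E_def by simp
  define ST where "ST = {X. steiner_tree V T X}"
  have finST: "finite ST" unfolding ST_def using finite_steiner[OF finV] .
  define f where "f Y = sum w' (snd Y)" for Y :: "'a set \<times> 'a set set"
  have XST: "X \<in> ST" unfolding ST_def using stX by simp
  have "Min (f ` ST) \<in> f ` ST" using finST XST by (intro Min_in) auto
  then obtain M where M: "M \<in> ST" "f M = Min (f ` ST)" by auto
  have Mle: "f M \<le> f Y" if "Y \<in> ST" for Y using M finST that by (simp add: Min_le)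
  have "min_steiner V T w' M" unfolding min_steiner_def using M Mle unfolding ST_def f_def by auto
  then have "M = OPT" using stab pert unfolding stable_with_opt_def by blast
  then have "f X \<le> f M" using key unfolding f_def X_def E_def by simp
  then have "min_steiner V T w' X" unfolding min_steiner_def using stX Mle unfolding ST_def f_def
    by (meson mem_Collect_eq order_trans)
  then have "X = OPT" using stab pert unfolding stable_with_opt_def by blast
  then have "E \<subseteq> EG" using F unfolding X_def E_def by auto
  then show False using ne E_def by auto
qed

lemma sum_distinct_nth:
  assumes "distinct l" shows "(\<Sum>i<length l. f (l ! i)) = sum f (set l)"
proof -
  have s: "set l = (!) l ` {..<length l}" by (auto simp: set_conv_nth)
  have "inj_on ((!) l) {..<length l}" using assms by (simp add: inj_on_def nth_eq_iff_index_eq)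
  then show ?thesis unfolding s by (simp add: sum.reindex)
qed

locale setting =
  fixes V T :: "'a::metric_space set" and OPT :: "'a set \<times> 'a set set"
    and VH :: "'a set" and EH :: "'a set set" and a :: 'a and b :: "'a list" and \<gamma> :: real
  assumes h_gamma: "\<gamma> > 1.755"
    and h_finV: "finite V" and h_TV: "T \<subseteq> V"
    and h_stab: "stable_with_opt \<gamma> V T OPT"
    and h_nst: "\<forall>u v. {u, v} \<in> snd OPT \<longrightarrow> u \<in> T \<or> v \<in> T"
    and h_sub: "subgraph VH EH OPT"
    and h_fan: "tc_fan V T VH EH a b"
    and h_i: "\<forall>u\<in>V. \<forall>v\<in>V. u \<in> VH \<union> T \<longrightarrow> v \<in> VH \<union> T \<longrightarrow>
           tcomp T VH EH u \<noteq> tcomp T VH EH v \<longrightarrow> {u, v} \<notin> EH \<longrightarrow>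
           avg_weight a b < dist u v"
    and h_ii: "\<forall>a' b'. tc_fan V T VH EH a' b' \<longrightarrow> avg_weight a b \<le> avg_weight a' b'"
    and h_iii: "\<forall>i<length b. \<forall>j<length b. dist a (b ! i) \<le> (1 / (\<gamma> - 1)) * dist a (b ! j)"
begin

abbreviation "S \<equiv> fst OPT"
abbreviation "E \<equiv> snd OPT"
abbreviation "A \<equiv> avg_weight a b"
abbreviation "m \<equiv> length b"
abbreviation "tc \<equiv> tcomp T VH EH"

lemma g1: "\<gamma> \<ge> 1" using h_gamma by simp

lemma opt_st: "steiner_tree V T OPT"
  using h_stab unfolding stable_with_opt_def min_steiner_def by auto

lemma tree: "is_tree S E" using opt_st unfolding steiner_tree_def by auto

lemma tr: "finite S" "S \<noteq> {}" "edges_in S E" "connected_on S E" "card E + 1 = card S" "T \<subseteq> S" "S \<subseteq> V"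
  using steiner_edges[OF opt_st] by auto

lemma finE: "finite E" using edges_in_finite tr by auto

lemma subH: "VH \<subseteq> S" "EH \<subseteq> E" "\<And>e. e \<in> EH \<Longrightarrow> e \<subseteq> VH"
  using h_sub unfolding subgraph_def by auto

lemma fan: "a \<in> V" "a \<notin> T" "m \<ge> 2" "set b \<subseteq> V" "a \<notin> set b"
  "\<And>i. i < m \<Longrightarrow> b ! i \<in> T \<or> (b ! i \<in> VH \<and> card (comp VH EH (b ! i)) \<ge> 2)"
  "\<And>i j. i < m \<Longrightarrow> j < m \<Longrightarrow> i \<noteq> j \<Longrightarrow> tc (b ! i) \<noteq> tc (b ! j)"
  using h_fan unfolding tc_fan_def by auto

lemma b_in: "i < m \<Longrightarrow> b ! i \<in> VH \<union> T" using fan(6) by blast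
lemma b_S: "i < m \<Longrightarrow> b ! i \<in> S" using b_in subH tr(6) by blast
lemma b_ne_a: assumes "i < m" shows "b ! i \<noteq> a"
proof
  assume "b ! i = a" with nth_mem[OF assms] fan(5) show False by simp
qed

lemma adjEH: "adj EH x y \<Longrightarrow> x \<in> VH \<and> y \<in> VH"
  unfolding adj_def using subH(3) by blast

lemma comp_self: "x \<in> VH \<Longrightarrow> x \<in> comp VH EH x" unfolding comp_def by simp
lemma tc_self: "x \<in> tc x" unfolding tcomp_def using comp_self by auto

lemma reachEH:
  assumes r: "(adj EH)\<^sup>*\<^sup>* x y" and ne: "x \<noteq> y"
  shows "x \<in> VH \<and> y \<in> VH \<and> tc x = tc y"
proof -
  have xV: "x \<in> VH" using r ne
    by (cases rule: converse_rtranclpE) (use adjEH in blast)+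
  have yV: "y \<in> VH" using r ne
    by (cases rule: rtranclp.cases) (use adjEH in blast)+
  have ry: "(adj EH)\<^sup>*\<^sup>* y x" using reach_sym[OF r] .
  have "comp VH EH x = comp VH EH y"
  proof -
    have "(adj EH)\<^sup>*\<^sup>* x w \<longleftrightarrow> (adj EH)\<^sup>*\<^sup>* y w" for w
      using rtranclp_trans[OF r, of w] rtranclp_trans[OF ry, of w] by blast
    then show ?thesis unfolding comp_def by simp
  qed
  then show ?thesis using xV yV unfolding tcomp_def by simp
qed

lemma tc_eq:
  assumes uv: "u \<in> VH \<union> T" "v \<in> VH \<union> T" "u \<noteq> v" and eq: "tc u = tc v"
  shows "u \<in> VH \<and> v \<in> VH \<and> (adj EH)\<^sup>*\<^sup>* u v"
proof -
  have vu: "v \<in> tc u" using tc_self[of v] unfolding eq .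
  have uv': "u \<in> tc v" using tc_self[of u] unfolding eq .
  have u: "u \<in> VH"
  proof (rule ccontr)
    assume "u \<notin> VH" then have "tc u = {u}" unfolding tcomp_def by simp
    then show False using vu uv(3) by simp
  qed
  have v: "v \<in> VH"
  proof (rule ccontr)
    assume "v \<notin> VH" then have "tc v = {v}" unfolding tcomp_def by simp
    then show False using uv' uv(3) by simp
  qed
  have "v \<in> comp VH EH u" using vu u unfolding tcomp_def by simp
  then show ?thesis using u v unfolding comp_def by simp
qed

lemma A_nonneg: "A \<ge> 0"
  unfolding avg_weight_def using fan(3) by (intro divide_nonneg_nonneg sum_nonneg) auto

lemma gam: "\<gamma> * (\<gamma> - 1) * (\<gamma> - 1) \<ge> 1" "\<gamma> * (\<gamma> - 1) \<ge> 1"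
proof -
  have a: "\<gamma> - 1 > 0.755" using h_gamma by simp
  have b: "(0.755::real) * 0.755 < (\<gamma> - 1) * (\<gamma> - 1)"
    by (rule mult_strict_mono) (use a in auto)
  have c: "(1.755::real) * (0.755 * 0.755) < \<gamma> * ((\<gamma> - 1) * (\<gamma> - 1))"
    by (rule mult_strict_mono) (use b h_gamma in auto)
  have e: "(1::real) < 1.755 * (0.755 * 0.755)" by simp
  have d: "1 < \<gamma> * ((\<gamma> - 1) * (\<gamma> - 1))" using c e by linarith
  then show "\<gamma> * (\<gamma> - 1) * (\<gamma> - 1) \<ge> 1" unfolding mult.assoc by linarith
  have "(1.755::real) * 0.755 < \<gamma> * (\<gamma> - 1)"
    by (rule mult_strict_mono) (use a h_gamma in auto)
  then show "\<gamma> * (\<gamma> - 1) \<ge> 1" by simp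
qed

end

lemma edge_ne: "edges_in S E \<Longrightarrow> {x, y} \<in> E \<Longrightarrow> x \<noteq> y"
proof
  assume "edges_in S E" "{x, y} \<in> E" "x = y"
  then obtain u v where "{x, y} = {u, v}" "u \<noteq> v" unfolding edges_in_def by blast
  then have "u \<in> {x}" "v \<in> {x}" using \<open>x = y\<close> by auto
  then show False using \<open>u \<noteq> v\<close> by simp
qed

context setting begin

lemma star_bound:
  assumes st: "{s, t} \<in> E" and sVH: "s \<notin> VH" and sT: "s \<notin> T"
  shows "dist s t > (\<gamma> - 1) * A"
proof -
  define N where "N = {z. {s, z} \<in> E}"
  have st_ne: "s \<noteq> t" using edge_ne[OF tr(3) st] .
  have tN: "t \<in> N" using st N_def by simp
  have sN: "s \<notin> N" using edge_ne[OF tr(3), of s s] N_def by auto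
  have sS: "s \<in> S" and tS: "t \<in> S" using edge_in[OF tr(3) st] by auto
  have NS: "N \<subseteq> S" using edge_in[OF tr(3)] N_def by auto
  have finN: "finite N" using NS tr(1) finite_subset by auto
  have NT: "N \<subseteq> T" using h_nst sT N_def by auto
  have A2: "tc z \<noteq> tc z'" if zN: "z \<in> N" "z' \<in> N" "z \<noteq> z'" for z z'
  proof
    assume eq: "tc z = tc z'"
    have zz: "z \<in> VH" "z' \<in> VH" "(adj EH)\<^sup>*\<^sup>* z z'"
      using tc_eq[OF _ _ zN(3) eq] zN NT by auto
    define E' where "E' = E - {{s, z}}"
    have "{s, z} \<notin> EH" using subH(3) sVH by blast
    then have sub: "EH \<subseteq> E'" using subH(2) unfolding E'_def by blast
    have r1: "(adj E')\<^sup>*\<^sup>* z' z" using reach_mono[OF sub reach_sym[OF zz(3)]] .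
    have "{s, z'} \<noteq> {s, z}"
    proof
      assume "{s, z'} = {s, z}"
      then have "z' \<in> {s, z}" by blast
      then show False using zN sN by auto
    qed
    moreover have "s \<noteq> z'" using sN zN by auto
    ultimately have a1: "adj E' s z'" using zN unfolding E'_def adj_def N_def by auto
    have "(adj E')\<^sup>*\<^sup>* s z" using converse_rtranclp_into_rtranclp[OF a1 r1] .
    moreover have "s \<noteq> z" using sN zN by auto
    moreover have "{s, z} \<in> E" using zN N_def by simp
    ultimately show False using tree_cycle[OF tree] unfolding E'_def by blast
  qed
  define r where "r = card N"
  define W where "W = (\<Sum>z\<in>N. dist s z)"
  define x where "x = dist s t"
  define SG where "SG = S - {s}"
  define EG where "EG = {e \<in> E. s \<notin> e} \<union> (\<lambda>z. {t, z}) ` (N - {t})"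
  have G1: "T \<subseteq> SG" using tr(6) sT unfolding SG_def by auto
  have G2: "SG \<subseteq> V" using tr(7) unfolding SG_def by auto
  have G3: "SG \<noteq> {}" using tS st_ne unfolding SG_def by auto
  have G4: "edges_in SG EG" unfolding edges_in_def
  proof
    fix e assume "e \<in> EG"
    then consider (old) "e \<in> E" "s \<notin> e" | (new) z where "z \<in> N - {t}" "e = {t, z}"
      unfolding EG_def by blast
    then show "\<exists>u v. e = {u, v} \<and> u \<noteq> v \<and> u \<in> SG \<and> v \<in> SG"
    proof cases
      case old
      then obtain u v where "e = {u, v}" "u \<noteq> v" "u \<in> S" "v \<in> S" using tr(3) unfolding edges_in_def by blast
      then show ?thesis using old unfolding SG_def by auto
    next
      case new
      then show ?thesis using NS sN tS st_ne unfolding SG_def by auto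
    qed
  qed
  have R: "w = s \<or> (adj EG)\<^sup>*\<^sup>* t w" if "(adj E)\<^sup>*\<^sup>* t w" for w
    using that
  proof (induction rule: rtranclp_induct)
    case base then show ?case by simp
  next
    case (step y w)
    show ?case
    proof (cases "w = s")
      case True then show ?thesis by simp
    next
      case wns: False
      show ?thesis
      proof (cases "y = s")
        case True
        then have "w \<in> N" using step(2) unfolding adj_def N_def by simp
        show ?thesis
        proof (cases "w = t")
          case True then show ?thesis by simp
        next
          case False
          then have "{t, w} \<in> EG" using \<open>w \<in> N\<close> unfolding EG_def by blast
          then have "adj EG t w" using False unfolding adj_def by simp
          then have "(adj EG)\<^sup>*\<^sup>* t w" by (rule r_into_rtranclp)
          then show ?thesis by simp
        qed
      next
        case False
        then have "(adj EG)\<^sup>*\<^sup>* t y" using step(3) by simp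
        moreover have "{y, w} \<in> EG" using step(2) False wns unfolding adj_def EG_def by simp
        then have "adj EG y w" using step(2) unfolding adj_def by simp
        ultimately show ?thesis using rtranclp.rtrancl_into_rtrancl by metis
      qed
    qed
  qed
  have G5: "connected_on SG EG"
  proof (rule conn_from)
    show "\<forall>w\<in>SG. (adj EG)\<^sup>*\<^sup>* t w"
    proof
      fix w assume w: "w \<in> SG"
      then have "(adj E)\<^sup>*\<^sup>* t w" using tr(4) tS unfolding connected_on_def SG_def by simp
      then show "(adj EG)\<^sup>*\<^sup>* t w" using R w unfolding SG_def by blast
    qed
  qed
  have stEG: "{s, t} \<notin> EG"
  proof
    assume "{s, t} \<in> EG"
    then obtain z where "z \<in> N - {t}" "{s, t} = {t, z}" unfolding EG_def by auto
    then have "s \<in> {t, z}" by blast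
    then show False using st_ne sN \<open>z \<in> N - {t}\<close> by auto
  qed
  have ne: "E - EG \<noteq> {}" using st stEG by blast
  have EGmE: "EG - E \<subseteq> (\<lambda>z. {t, z}) ` (N - {t})" unfolding EG_def by blast
  have EmEG: "E - EG = (\<lambda>z. {s, z}) ` N"
  proof
    show "E - EG \<subseteq> (\<lambda>z. {s, z}) ` N"
    proof
      fix e assume e: "e \<in> E - EG"
      then have "s \<in> e" unfolding EG_def by blast
      obtain u v where uv: "e = {u, v}" using e tr(3) unfolding edges_in_def by blast
      show "e \<in> (\<lambda>z. {s, z}) ` N"
      proof (cases "u = s")
        case True then show ?thesis using e uv unfolding N_def by auto
      next
        case False
        then have "v = s" using \<open>s \<in> e\<close> uv by auto
        then have "e = {s, u}" using uv by auto
        then show ?thesis using e unfolding N_def by auto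
      qed
    qed
    show "(\<lambda>z. {s, z}) ` N \<subseteq> E - EG"
    proof
      fix e assume "e \<in> (\<lambda>z. {s, z}) ` N"
      then obtain z where z: "z \<in> N" "e = {s, z}" by auto
      have "e \<notin> EG"
      proof
        assume "e \<in> EG"
        then obtain z' where "z' \<in> N - {t}" "{s, z} = {t, z'}" using z unfolding EG_def by auto
        then have "s \<in> {t, z'}" by blast
        then show False using st_ne sN \<open>z' \<in> N - {t}\<close> by auto
      qed
      then show "e \<in> E - EG" using z unfolding N_def by auto
    qed
  qed
  have finNt: "finite (N - {t})" using finN by simp
  have w1: "sum edist (EG - E) \<le> (\<Sum>z\<in>N - {t}. dist t z)"
  proof -
    have "sum edist (EG - E) \<le> sum edist ((\<lambda>z. {t, z}) ` (N - {t}))"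
      by (rule sum_mono2) (use finNt EGmE in \<open>auto simp: edist_eq\<close>)
    also have "\<dots> \<le> sum (edist \<circ> (\<lambda>z. {t, z})) (N - {t})"
      by (rule sum_image_le) (use finNt in \<open>auto simp: edist_eq\<close>)
    also have "\<dots> = (\<Sum>z\<in>N - {t}. dist t z)" by (simp add: edist_eq)
    finally show ?thesis .
  qed
  have Wsplit: "W = x + (\<Sum>z\<in>N - {t}. dist s z)"
    unfolding W_def x_def using sum.remove[OF finN tN] by simp
  have w2: "(\<Sum>z\<in>N - {t}. dist t z) \<le> (real r - 1) * x + (W - x)"
  proof -
    have "(\<Sum>z\<in>N - {t}. dist t z) \<le> (\<Sum>z\<in>N - {t}. x + dist s z)"
      by (rule sum_mono) (use dist_triangle[of t _ s] in \<open>simp add: x_def dist_commute\<close>)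
    also have "\<dots> = real (card (N - {t})) * x + (\<Sum>z\<in>N - {t}. dist s z)"
      by (simp add: sum.distrib)
    also have "real (card (N - {t})) = real r - 1"
    proof -
      have "card N > 0" using tN finN card_gt_0_iff by blast
      then have "card N \<ge> 1" by simp
      then show ?thesis using tN finN unfolding r_def by (simp add: card_Diff_singleton of_nat_diff)
    qed
    finally show ?thesis using Wsplit by simp
  qed
  have inj: "inj_on (\<lambda>z. {s, z}) N"
  proof
    fix z z' assume zz: "z \<in> N" "z' \<in> N" "{s, z} = {s, z'}"
    then have "z \<in> {s, z'}" by blast
    then show "z = z'" using zz sN by auto
  qed
  have w3: "sum edist (E - EG) = W"
    unfolding EmEG W_def using inj by (simp add: sum.reindex edist_eq)
  have key: "\<not> ((real r - 1) * x + (W - x) \<le> \<gamma> * W)"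
  proof
    assume "(real r - 1) * x + (W - x) \<le> \<gamma> * W"
    then have "sum edist (EG - snd OPT) \<le> \<gamma> * sum edist (snd OPT - EG)" unfolding w3 using w1 w2 by linarith
    then show False using CL[OF h_stab h_finV g1 G1 G2 G3 G4 G5 ne] by blast
  qed
  have xpos: "x > 0" using st_ne unfolding x_def by simp
  have Wx: "x \<le> W" unfolding W_def x_def by (rule member_le_sum) (use tN finN in auto)
  have Wnn: "W \<ge> 0" using Wx xpos by linarith
  have "card N > 0" using tN finN card_gt_0_iff by blast
  then have r1: "r \<ge> 1" unfolding r_def by simp
  have r3: "r \<ge> 3"
  proof (rule ccontr)
    assume "\<not> r \<ge> 3"
    then have "real r - 1 \<le> 1" by simp
    then have "(real r - 1) * x \<le> x" using xpos by (simp add: mult_le_cancel_right1)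
    moreover have "W \<le> \<gamma> * W" using mult_right_mono[OF g1 Wnn] by simp
    ultimately show False using key by linarith
  qed
  obtain l where l: "set l = N" "distinct l" using finite_distinct_list[OF finN] by blast
  have len: "length l = r" using l distinct_card unfolding r_def by fastforce
  have fanl: "tc_fan V T VH EH s l"
    unfolding tc_fan_def
  proof (intro conjI allI impI)
    show "s \<in> V - T" using sS tr(7) sT by auto
    show "2 \<le> length l" using len r3 by simp
    show "set l \<subseteq> V" using l NS tr(7) by auto
    show "s \<notin> set l" using l sN by simp
    fix i assume i: "i < length l"
    then have "l ! i \<in> N" using l nth_mem by blast
    then show "l ! i \<in> T \<or> l ! i \<in> VH \<and> 2 \<le> card (comp VH EH (l ! i))" using NT by auto
    fix j assume j: "j < length l" "i \<noteq> j"
    have "l ! i \<noteq> l ! j" using l(2) i j by (simp add: nth_eq_iff_index_eq)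
    moreover have "l ! j \<in> N" using l j nth_mem by blast
    ultimately show "tc (l ! i) \<noteq> tc (l ! j)" using A2 \<open>l ! i \<in> N\<close> by blast
  qed
  have "A \<le> avg_weight s l" using h_ii fanl by blast
  also have "avg_weight s l = W / (real r - 1)"
    unfolding avg_weight_def W_def using sum_distinct_nth[OF l(2), of "dist s"] l len by simp
  finally have "A \<le> W / (real r - 1)" .
  moreover have rpos: "real r - 1 > 0" using r3 by simp
  ultimately have WA: "(real r - 1) * A \<le> W" by (simp add: pos_le_divide_eq mult.commute)
  have h1: "(\<gamma> - 1) * W < (real r - 2) * x"
  proof -
    have "\<gamma> * W < (real r - 1) * x + (W - x)" using key by linarith
    moreover have "(\<gamma> - 1) * W = \<gamma> * W - W" "(real r - 2) * x = (real r - 1) * x - x"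
      by (simp_all add: algebra_simps)
    ultimately show ?thesis by linarith
  qed
  have gm: "\<gamma> - 1 \<ge> 0" using g1 by simp
  have h2: "(\<gamma> - 1) * ((real r - 1) * A) \<le> (\<gamma> - 1) * W" using mult_left_mono[OF WA gm] .
  have h3: "(real r - 2) * A \<le> (real r - 1) * A" using A_nonneg by (simp add: mult_right_mono)
  have h4: "(\<gamma> - 1) * ((real r - 2) * A) \<le> (\<gamma> - 1) * ((real r - 1) * A)" using mult_left_mono[OF h3 gm] .
  have "(real r - 2) * ((\<gamma> - 1) * A) < (real r - 2) * x"
  proof -
    have "(real r - 2) * ((\<gamma> - 1) * A) = (\<gamma> - 1) * ((real r - 2) * A)" by (simp add: algebra_simps)
    then show ?thesis using h1 h2 h4 by linarith
  qed
  moreover have "real r - 2 > 0" using r3 by simp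
  ultimately have "(\<gamma> - 1) * A < x" by simp
  then show ?thesis unfolding x_def .
qed

lemma edge_bound:
  assumes e: "e \<in> E" "e \<notin> EH"
  shows "edist e > A \<or> edist e > (\<gamma> - 1) * A"
proof -
  obtain u v where uv: "e = {u, v}" "u \<noteq> v" "u \<in> S" "v \<in> S" using e tr(3) unfolding edges_in_def by blast
  show ?thesis
  proof (cases "u \<in> VH \<union> T \<and> v \<in> VH \<union> T")
    case True
    have "tc u \<noteq> tc v"
    proof
      assume eq: "tc u = tc v"
      then have r: "(adj EH)\<^sup>*\<^sup>* u v" using tc_eq[OF _ _ uv(2) eq] True by blast
      have sub: "EH \<subseteq> E - {{u, v}}" using subH(2) e uv by blast
      show False using tree_cycle[OF tree _ uv(2) reach_mono[OF sub r]] e uv by blast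
    qed
    then have "A < dist u v" using h_i True uv e tr(7) by blast
    then show ?thesis using uv by (simp add: edist_eq)
  next
    case False
    then consider "u \<notin> VH" "u \<notin> T" | "v \<notin> VH" "v \<notin> T" by blast
    then show ?thesis
    proof cases
      case 1
      then have "dist u v > (\<gamma> - 1) * A" using star_bound e uv by blast
      then show ?thesis using uv by (simp add: edist_eq)
    next
      case 2
      have "{v, u} \<in> E" using e uv by (simp add: insert_commute)
      then have "dist v u > (\<gamma> - 1) * A" using star_bound 2 by blast
      then show ?thesis using uv by (simp add: edist_eq dist_commute)
    qed
  qed
qed

end

context setting begin

lemma gpos: "\<gamma> - 1 > 0" using h_gamma by simp

lemma good:
  assumes "e \<in> E" "e \<notin> EH"
  shows "A \<le> \<gamma> * edist e" "(1 / (\<gamma> - 1)) * A \<le> \<gamma> * edist e"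
proof -
  have An: "A \<ge> 0" using A_nonneg .
  have rho1: "1 / (\<gamma> - 1) \<le> \<gamma>" using gam(2) gpos by (simp add: divide_le_eq mult.commute)
  have rho2: "1 / (\<gamma> - 1) \<le> \<gamma> * (\<gamma> - 1)" using gam(1) gpos by (simp add: divide_le_eq mult.commute mult.left_commute)
  have en: "edist e \<ge> 0" using edist_nonneg[OF tr(3) assms(1)] .
  consider "edist e > A" | "edist e > (\<gamma> - 1) * A" using edge_bound[OF assms] by blast
  then have both: "A \<le> \<gamma> * edist e \<and> (1 / (\<gamma> - 1)) * A \<le> \<gamma> * edist e"
  proof cases
    case 1
    have "edist e \<le> \<gamma> * edist e" using mult_right_mono[OF g1 en] by simp
    moreover have "(1 / (\<gamma> - 1)) * A \<le> \<gamma> * A" using mult_right_mono[OF rho1 An] .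
    moreover have "\<gamma> * A \<le> \<gamma> * edist e" using 1 g1 by simp
    ultimately show ?thesis using 1 by linarith
  next
    case 2
    have g0: "\<gamma> \<ge> 0" using g1 by simp
    have "\<gamma> * ((\<gamma> - 1) * A) \<le> \<gamma> * edist e" using 2 mult_left_mono[of "(\<gamma> - 1) * A" "edist e" \<gamma>] g0 by simp
    moreover have "A \<le> \<gamma> * ((\<gamma> - 1) * A)" using mult_right_mono[OF gam(2) An] by (simp add: mult.assoc)
    moreover have "(1 / (\<gamma> - 1)) * A \<le> \<gamma> * ((\<gamma> - 1) * A)" using mult_right_mono[OF rho2 An] by (simp add: mult.assoc)
    ultimately show ?thesis by linarith
  qed
  then show "A \<le> \<gamma> * edist e" "(1 / (\<gamma> - 1)) * A \<le> \<gamma> * edist e" by auto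
qed

lemma sumA: "(\<Sum>i<m. dist a (b ! i)) = (real m - 1) * A"
proof -
  have "real m - 1 > 0" using fan(3) by (cases b) auto
  then show ?thesis unfolding avg_weight_def by simp
qed

lemma d_le:
  assumes j: "j < m" shows "dist a (b ! j) \<le> (1 / (\<gamma> - 1)) * A"
proof -
  define \<rho> where "\<rho> = 1 / (\<gamma> - 1)"
  have "(\<Sum>i<m. dist a (b ! j)) \<le> (\<Sum>i<m. \<rho> * dist a (b ! i))"
    by (rule sum_mono) (use h_iii j in \<open>auto simp: \<rho>_def\<close>)
  then have "real m * dist a (b ! j) \<le> \<rho> * ((real m - 1) * A)"
    by (simp add: sum_distrib_left[symmetric] sumA)
  moreover have "\<rho> \<ge> 0" using gpos unfolding \<rho>_def by simp
  then have "\<rho> * ((real m - 1) * A) \<le> \<rho> * (real m * A)"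
    using A_nonneg by (intro mult_left_mono) (auto simp: mult_right_mono)
  ultimately have "real m * dist a (b ! j) \<le> real m * (\<rho> * A)" by (simp add: algebra_simps)
  moreover have "real m > 0" using fan(3) by (cases b) auto
  ultimately have "dist a (b ! j) \<le> \<rho> * A" using mult_le_cancel_left_pos by blast
  then show ?thesis unfolding \<rho>_def .
qed

lemma walk_S:
  assumes "walk G p n" "edges_in SG G" "k \<le> n" "n > 0"
  shows "p k \<in> SG"
proof (cases "k < n")
  case True
  then have "adj G (p k) (p (Suc k))" using assms(1) unfolding walk_def by simp
  then show ?thesis using adj_in[OF assms(2)] by simp
next
  case False
  then have "k = n" using assms by simp
  obtain n' where n': "n = Suc n'" using assms(4) gr0_implies_Suc by blast
  have "adj G (p n') (p (Suc n'))" using assms(1) n' unfolding walk_def by simp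
  then show ?thesis using adj_in[OF assms(2)] \<open>k = n\<close> n' by simp
qed

end

context setting begin

lemma exch_edges_in:
  assumes "edges_in SG G" "x \<noteq> y" "x \<in> SG" "y \<in> SG"
  shows "edges_in SG ((G - {r}) \<union> {{x, y}})"
  using assms unfolding edges_in_def by blast

lemma caseS:
  assumes aS: "a \<in> S" and j: "j < m" and nE: "{a, b ! j} \<notin> E"
  shows False
proof -
  define bj where "bj = b ! j"
  have bjS: "bj \<in> S" using b_S[OF j] bj_def by simp
  have ne: "a \<noteq> bj" using b_ne_a[OF j] bj_def by simp
  have "(adj E)\<^sup>*\<^sup>* a bj" using tr(4) aS bjS unfolding connected_on_def by blast
  then obtain p n where p: "p 0 = a" "p n = bj" "swalk E p n" using reach_swalk by metis
  have w: "walk E p n" using p(3) unfolding swalk_def by simp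
  have n0: "n > 0"
  proof (rule ccontr)
    assume "\<not> n > 0" then have "n = 0" by simp
    then show False using p ne by simp
  qed
  have pS: "p k \<in> S" if "k \<le> n" for k using walk_S[OF w tr(3) that n0] .
  have ed: "p k \<noteq> p (Suc k) \<and> {p k, p (Suc k)} \<in> E" if "k < n" for k
    using w that unfolding walk_def adj_def by blast
  have "\<exists>k<n. edist {a, bj} \<le> \<gamma> * edist {p k, p (Suc k)}"
  proof (cases "\<forall>k<n. {p k, p (Suc k)} \<in> EH")
    case True
    have stepEH: "adj EH (p k) (p (Suc k))" if "k < n" for k
      using True ed[OF that] that unfolding adj_def by blast
    have rEH: "(adj EH)\<^sup>*\<^sup>* (p 0) (p n)" by (rule walk_reach_gen) (use stepEH in auto)
    have r1: "(adj EH)\<^sup>*\<^sup>* (p 0) (p (Suc 0))" by (rule walk_reach_gen) (use stepEH n0 in auto)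
    define t where "t = p (Suc 0)"
    have ta: "t \<noteq> a" using ed[OF n0] p(1) unfolding t_def by auto
    have i1: "a \<in> VH \<and> t \<in> VH \<and> tc a = tc t" using reachEH[OF r1] ta p(1) unfolding t_def by auto
    have i2: "bj \<in> VH \<and> tc a = tc bj" using reachEH[OF rEH] ne p by auto
    have tS: "t \<in> S" using pS[of "Suc 0"] n0 unfolding t_def by simp
    define b' where "b' = b[j := t]"
    have len': "length b' = m" unfolding b'_def by simp
    have nth': "b' ! i = (if i = j then t else b ! i)" if "i < m" for i
      using that j unfolding b'_def by simp
    have tc': "tc (b' ! i) = tc (b ! i)" if "i < m" for i
      using nth'[OF that] i1 i2 bj_def by auto
    have finc: "finite (comp VH EH t)" using subH(1) tr(1) finite_subset unfolding comp_def
      by (metis (no_types, lifting) mem_Collect_eq subsetI)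
    have ra: "(adj EH)\<^sup>*\<^sup>* t a" using reach_sym[OF r1] p(1) unfolding t_def by simp
    have "{a, t} \<subseteq> comp VH EH t" using i1 ra unfolding comp_def by simp
    then have "card {a, t} \<le> card (comp VH EH t)" using finc card_mono by blast
    then have card2: "card (comp VH EH t) \<ge> 2" using ta by simp
    have fan': "tc_fan V T VH EH a b'"
      unfolding tc_fan_def
    proof (intro conjI allI impI)
      show "a \<in> V - T" using fan(1,2) by simp
      show "2 \<le> length b'" using len' fan(3) by simp
      show "set b' \<subseteq> V" unfolding b'_def using fan(4) tS tr(7) set_update_subset_insert by fastforce
      show "a \<notin> set b'"
      proof
        assume "a \<in> set b'"
        then have "a \<in> insert t (set b)" using set_update_subset_insert unfolding b'_def by fastforce
        then show False using ta fan(5) by simp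
      qed
      fix i assume i: "i < length b'"
      then have im: "i < m" using len' by simp
      show "b' ! i \<in> T \<or> b' ! i \<in> VH \<and> 2 \<le> card (comp VH EH (b' ! i))"
        using nth'[OF im] fan(6)[OF im] i1 card2 by auto
      fix k assume k: "k < length b'" "i \<noteq> k"
      then have km: "k < m" using len' by simp
      show "tc (b' ! i) \<noteq> tc (b' ! k)" using tc'[OF im] tc'[OF km] fan(7)[OF im km k(2)] by simp
    qed
    have Ale: "A \<le> avg_weight a b'" using h_ii fan' by blast
    have sum': "(\<Sum>i<m. dist a (b' ! i)) = (\<Sum>i<m. dist a (b ! i)) - dist a bj + dist a t"
    proof -
      have fin: "finite {..<m}" by simp
      have jin: "j \<in> {..<m}" using j by simp
      have "(\<Sum>i<m. dist a (b' ! i)) = dist a (b' ! j) + (\<Sum>i\<in>{..<m} - {j}. dist a (b' ! i))"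
        using sum.remove[OF fin jin] by blast
      also have "(\<Sum>i\<in>{..<m} - {j}. dist a (b' ! i)) = (\<Sum>i\<in>{..<m} - {j}. dist a (b ! i))"
        by (rule sum.cong) (use nth' in auto)
      also have "dist a (b' ! j) = dist a t" using nth'[OF j] by simp
      also have "(\<Sum>i<m. dist a (b ! i)) = dist a (b ! j) + (\<Sum>i\<in>{..<m} - {j}. dist a (b ! i))"
        using sum.remove[OF fin jin] by blast
      ultimately show ?thesis unfolding bj_def by linarith
    qed
    have mpos: "real m - 1 > 0" using fan(3) by (cases b) auto
    have "avg_weight a b' = ((\<Sum>i<m. dist a (b ! i)) - dist a bj + dist a t) / (real m - 1)"
      unfolding avg_weight_def len' sum' ..
    then have "A * (real m - 1) \<le> (\<Sum>i<m. dist a (b ! i)) - dist a bj + dist a t"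
      using Ale mpos by (simp add: pos_le_divide_eq)
    then have dle: "dist a bj \<le> dist a t" using sumA by (simp add: algebra_simps)
    have "edist {a, bj} \<le> \<gamma> * edist {p 0, p (Suc 0)}"
    proof -
      have "dist a t \<le> \<gamma> * dist a t" using mult_right_mono[OF g1, of "dist a t"] by simp
      then show ?thesis using dle p(1) unfolding t_def by (simp add: edist_eq)
    qed
    then show ?thesis using n0 by blast
  next
    case False
    then obtain k where k: "k < n" "{p k, p (Suc k)} \<notin> EH" by blast
    have "(1 / (\<gamma> - 1)) * A \<le> \<gamma> * edist {p k, p (Suc k)}" using good(2) ed[OF k(1)] k(2) by blast
    moreover have "dist a bj \<le> (1 / (\<gamma> - 1)) * A" using d_le[OF j] bj_def by simp
    ultimately show ?thesis using k(1) by (auto simp: edist_eq)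
  qed
  then obtain k where k: "k < n" and wk: "edist {a, bj} \<le> \<gamma> * edist {p k, p (Suc k)}" by blast
  define r where "r = {p k, p (Suc k)}"
  define EG where "EG = (E - {r}) \<union> {{p 0, p n}}"
  have G5: "connected_on S EG" unfolding EG_def r_def
    using exchange_conn[OF tr(4) p(3) k pS[of 0] pS[of n] pS[of k]] k by simp
  have G4: "edges_in S EG" unfolding EG_def using exch_edges_in[OF tr(3)] ne aS bjS p by simp
  have rE: "r \<in> E" using ed[OF k] r_def by simp
  have EGr: "EG = (E - {r}) \<union> {{a, bj}}" unfolding EG_def using p by simp
  have d1: "E - EG = {r}" using rE nE bj_def unfolding EGr by blast
  have d2: "EG - E = {{a, bj}}" using nE bj_def unfolding EGr by blast
  have "sum edist (EG - E) \<le> \<gamma> * sum edist (E - EG)" unfolding d1 d2 using wk r_def by simp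
  moreover have "E - EG \<noteq> {}" using d1 by simp
  ultimately show False using CL[OF h_stab h_finV g1 tr(6) tr(7) tr(2) G4 G5] by blast
qed

end

context setting begin

definition Fk :: "nat \<Rightarrow> 'a set set" where
  "Fk k = (\<lambda>i. {a, b ! i}) ` {..<k}"

lemma E_no_a: "a \<notin> S \<Longrightarrow> e \<in> E \<Longrightarrow> a \<notin> e"
proof
  assume "a \<notin> S" "e \<in> E" "a \<in> e"
  then obtain u v where "e = {u, v}" "u \<in> S" "v \<in> S" using tr(3) unfolding edges_in_def by blast
  then show False using \<open>a \<in> e\<close> \<open>a \<notin> S\<close> by auto
qed

lemma Fk_edges_in: "k \<le> m \<Longrightarrow> edges_in (insert a S) ((E - R) \<union> Fk k)"
  unfolding edges_in_def
proof
  fix e assume k: "k \<le> m" and e: "e \<in> (E - R) \<union> Fk k"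
  show "\<exists>u v. e = {u, v} \<and> u \<noteq> v \<and> u \<in> insert a S \<and> v \<in> insert a S"
  proof (cases "e \<in> E")
    case True
    then obtain u v where "e = {u, v}" "u \<noteq> v" "u \<in> S" "v \<in> S" using tr(3) unfolding edges_in_def by blast
    then show ?thesis by blast
  next
    case False
    then obtain i where i: "i < k" "e = {a, b ! i}" using e unfolding Fk_def by blast
    then have "i < m" using k by simp
    then show ?thesis using i b_S b_ne_a by fastforce
  qed
qed

lemma step_ind:
  assumes aS: "a \<notin> S" and k: "1 \<le> k" "k \<le> m"
  shows "\<exists>R. R \<subseteq> E - EH \<and> finite R \<and> card R = k - 1 \<and> connected_on (insert a S) ((E - R) \<union> Fk k)"
  using k
proof (induction k)
  case 0 then show ?case by simp
next
  case (Suc k)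
  show ?case
  proof (cases "k = 0")
    case True
    have m0: "0 < m" using fan(3) by linarith
    have b0: "b ! 0 \<in> S" "b ! 0 \<noteq> a" using b_S[OF m0] b_ne_a[OF m0] by auto
    have F1: "Fk (Suc k) = {{a, b ! 0}}" unfolding Fk_def True by (simp add: lessThan_Suc)
    define G where "G = (E - {}) \<union> Fk (Suc k)"
    have adja: "adj G a (b ! 0)" using b0 unfolding G_def F1 adj_def by auto
    have "\<forall>w\<in>insert a S. (adj G)\<^sup>*\<^sup>* a w"
    proof
      fix w assume w: "w \<in> insert a S"
      show "(adj G)\<^sup>*\<^sup>* a w"
      proof (cases "w = a")
        case True then show ?thesis by simp
      next
        case False
        then have "(adj E)\<^sup>*\<^sup>* (b ! 0) w" using w b0 tr(4) unfolding connected_on_def by auto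
        then have "(adj G)\<^sup>*\<^sup>* (b ! 0) w" using reach_mono[of E G] unfolding G_def by blast
        then show ?thesis using converse_rtranclp_into_rtranclp[of "adj G" a "b ! 0" w] adja by blast
      qed
    qed
    then have "connected_on (insert a S) G" by (rule conn_from)
    then show ?thesis using True unfolding G_def by (intro exI[of _ "{}"]) simp
  next
    case False
    then obtain R where R: "R \<subseteq> E - EH" "finite R" "card R = k - 1"
      and con: "connected_on (insert a S) ((E - R) \<union> Fk k)" using Suc by auto
    have km: "k < m" using Suc by simp
    define G where "G = (E - R) \<union> Fk k"
    define bk where "bk = b ! k"
    have bkS: "bk \<in> S" "bk \<noteq> a" using b_S[OF km] b_ne_a[OF km] bk_def by auto
    have edG: "edges_in (insert a S) G" unfolding G_def using Fk_edges_in km by simp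
    have "(adj G)\<^sup>*\<^sup>* a bk" using con bkS unfolding connected_on_def G_def by blast
    then obtain p n where p: "p 0 = a" "p n = bk" "swalk G p n" using reach_swalk by metis
    have w: "walk G p n" and inj: "inj_on p {0..n}" using p(3) unfolding swalk_def by auto
    have n0: "n > 0"
    proof (rule ccontr)
      assume "\<not> n > 0" then have "n = 0" by simp
      then show False using p bkS by simp
    qed
    have pS: "p i \<in> insert a S" if "i \<le> n" for i using walk_S[OF w edG that n0] .
    have ed: "p i \<noteq> p (Suc i) \<and> {p i, p (Suc i)} \<in> G" if "i < n" for i
      using w that unfolding walk_def adj_def by blast
    have pna: "p i \<noteq> a" if "1 \<le> i" "i \<le> n" for i
    proof
      assume "p i = a"
      then have "p i = p 0" using p by simp
      then have "i = 0" using inj that unfolding inj_on_def by (metis atLeastAtMost_iff le0)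
      then show False using that by simp
    qed
    have eE: "{p i, p (Suc i)} \<in> E - R" if "1 \<le> i" "i < n" for i
    proof -
      have "{p i, p (Suc i)} \<notin> Fk k"
      proof
        assume "{p i, p (Suc i)} \<in> Fk k"
        then have "a \<in> {p i, p (Suc i)}" unfolding Fk_def by blast
        then show False using pna[of i] pna[of "Suc i"] that by auto
      qed
      then show ?thesis using ed[OF that(2)] unfolding G_def by blast
    qed
    have "{a, p (Suc 0)} \<in> G" using ed[OF n0] p(1) by simp
    moreover have "{a, p (Suc 0)} \<notin> E" using E_no_a[OF aS] by blast
    ultimately have "{a, p (Suc 0)} \<in> Fk k" unfolding G_def by blast
    then obtain i' where i': "i' < k" "{a, p (Suc 0)} = {a, b ! i'}" unfolding Fk_def by blast
    have p1a: "p (Suc 0) \<noteq> a" using pna[of "Suc 0"] n0 by simp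
    have p1: "p (Suc 0) = b ! i'"
    proof -
      have "p (Suc 0) \<in> {a, b ! i'}" using i'(2) by blast
      then show ?thesis using p1a by blast
    qed
    have tcne: "tc (b ! i') \<noteq> tc bk" using fan(7)[of i' k] i' km unfolding bk_def by simp
    then have p1n: "p (Suc 0) \<noteq> p n" using p1 p(2) by auto
    have "\<exists>i. 1 \<le> i \<and> i < n \<and> {p i, p (Suc i)} \<notin> EH"
    proof (rule ccontr)
      assume "\<not> ?thesis"
      then have allEH: "{p i, p (Suc i)} \<in> EH" if "1 \<le> i" "i < n" for i using that by blast
      have st: "adj EH (p i) (p (Suc i))" if "Suc 0 \<le> i" "i < n" for i
        using allEH[of i] ed[of i] that unfolding adj_def by simp
      have "(adj EH)\<^sup>*\<^sup>* (p (Suc 0)) (p n)" by (rule walk_reach_gen) (use st n0 in auto)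
      then have "tc (p (Suc 0)) = tc (p n)" using reachEH p1n by blast
      then show False using tcne p1 p(2) by simp
    qed
    then obtain i where i: "1 \<le> i" "i < n" "{p i, p (Suc i)} \<notin> EH" by blast
    define r where "r = {p i, p (Suc i)}"
    have rER: "r \<in> E - R" using eE[OF i(1,2)] r_def by simp
    have rF: "r \<notin> Fk k"
    proof
      assume "r \<in> Fk k" then have "a \<in> r" unfolding Fk_def by blast
      then show False using E_no_a[OF aS] rER by blast
    qed
    have con': "connected_on (insert a S) ((G - {r}) \<union> {{p 0, p n}})"
      unfolding r_def
      using exchange_conn[OF con[folded G_def] p(3) i(2) pS[of 0] pS[of n] pS[of i]] i by simp
    have FS: "Fk (Suc k) = insert {a, bk} (Fk k)" unfolding Fk_def bk_def by (simp add: lessThan_Suc)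
    have Geq: "(G - {r}) \<union> {{p 0, p n}} = (E - insert r R) \<union> Fk (Suc k)"
      unfolding FS G_def using p rF by auto
    have R': "insert r R \<subseteq> E - EH" using R rER i(3) r_def by blast
    have card': "card (insert r R) = Suc k - 1" using R rER False by simp
    show ?thesis using R' card' con' Geq R(2) by (intro exI[of _ "insert r R"]) simp
  qed
qed

lemma caseNS:
  assumes aS: "a \<notin> S" shows False
proof -
  have m1: "1 \<le> m" using fan(3) by linarith
  obtain R where R: "R \<subseteq> E - EH" "finite R" "card R = m - 1"
    and con: "connected_on (insert a S) ((E - R) \<union> Fk m)" using step_ind[OF aS m1 le_refl] by blast
  define G where "G = (E - R) \<union> Fk m"
  have G1: "T \<subseteq> insert a S" using tr(6) by auto
  have G2: "insert a S \<subseteq> V" using tr(7) fan(1) by auto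
  have G3: "insert a S \<noteq> {}" by simp
  have G4: "edges_in (insert a S) G" unfolding G_def using Fk_edges_in by simp
  have G5: "connected_on (insert a S) G" using con G_def by simp
  have RsubF: "r \<notin> Fk m" if "r \<in> R" for r
  proof
    assume "r \<in> Fk m" then have "a \<in> r" unfolding Fk_def by blast
    then show False using E_no_a[OF aS] R(1) that by blast
  qed
  have RsubG: "R \<subseteq> E - G" using R(1) RsubF unfolding G_def by blast
  have Rne: "R \<noteq> {}" using R(3) fan(3) by auto
  have ne: "E - G \<noteq> {}" using RsubG Rne by blast
  have finEG: "finite (E - G)" using finE by simp
  have nnE: "edist e \<ge> 0" if "e \<in> E" for e using edist_nonneg[OF tr(3) that] .
  have s1: "sum edist R \<le> sum edist (E - G)"
    by (rule sum_mono2[OF finEG RsubG]) (use nnE in auto)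
  have s2: "(\<Sum>r\<in>R. A) \<le> (\<Sum>r\<in>R. \<gamma> * edist r)"
    by (rule sum_mono) (use good(1) R(1) in blast)
  have s3: "(\<Sum>r\<in>R. A) = (real m - 1) * A"
  proof -
    have "real (m - 1) = real m - 1" using m1 by (simp add: of_nat_diff)
    then show ?thesis using R(3) by simp
  qed
  have g0: "\<gamma> \<ge> 0" using g1 by simp
  have rhs: "(real m - 1) * A \<le> \<gamma> * sum edist (E - G)"
  proof -
    have "(\<Sum>r\<in>R. \<gamma> * edist r) = \<gamma> * sum edist R" by (simp add: sum_distrib_left)
    moreover have "\<gamma> * sum edist R \<le> \<gamma> * sum edist (E - G)" using mult_left_mono[OF s1 g0] .
    ultimately show ?thesis using s2 s3 by linarith
  qed
  have finF: "finite (Fk m)" unfolding Fk_def by simp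
  have lhs: "sum edist (G - E) \<le> (real m - 1) * A"
  proof -
    have "sum edist (G - E) \<le> sum edist (Fk m)"
      by (rule sum_mono2[OF finF]) (auto simp: G_def Fk_def edist_eq)
    also have "\<dots> \<le> sum (edist \<circ> (\<lambda>i. {a, b ! i})) {..<m}"
      unfolding Fk_def by (rule sum_image_le) (auto simp: edist_eq)
    also have "\<dots> = (\<Sum>i<m. dist a (b ! i))" by (simp add: edist_eq)
    also have "\<dots> = (real m - 1) * A" using sumA .
    finally show ?thesis .
  qed
  show False using CL[OF h_stab h_finV g1 G1 G2 G3 G4 G5 ne] lhs rhs by linarith
qed

theorem main: "\<forall>i<length b. {a, b ! i} \<in> snd OPT"
proof (rule ccontr)
  assume "\<not> ?thesis"
  then obtain j where j: "j < m" "{a, b ! j} \<notin> E" by blast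
  show False
  proof (cases "a \<in> S")
    case True then show False using caseS[OF True j] by blast
  next
    case False then show False using caseNS by blast
  qed
qed

end

theorem mainTheorem9:
  fixes V T :: "'a::metric_space set" and OPT :: "'a set \<times> 'a set set"
    and VH :: "'a set" and EH :: "'a set set" and a :: 'a and b :: "'a list" and \<gamma> :: real
  assumes "\<gamma> > 1.755"
    and "finite V" and "T \<subseteq> V"
    and "stable_with_opt \<gamma> V T OPT"
    and "\<forall>u v. {u, v} \<in> snd OPT \<longrightarrow> u \<in> T \<or> v \<in> T"
    and "subgraph VH EH OPT"
    and "tc_fan V T VH EH a b"
    and "\<forall>u\<in>V. \<forall>v\<in>V. u \<in> VH \<union> T \<longrightarrow> v \<in> VH \<union> T \<longrightarrow>
           tcomp T VH EH u \<noteq> tcomp T VH EH v \<longrightarrow> {u, v} \<notin> EH \<longrightarrow>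
           avg_weight a b < dist u v"
    and "\<forall>a' b'. tc_fan V T VH EH a' b' \<longrightarrow> avg_weight a b \<le> avg_weight a' b'"
    and "\<forall>i<length b. \<forall>j<length b. dist a (b ! i) \<le> (1 / (\<gamma> - 1)) * dist a (b ! j)"
  shows "\<forall>i<length b. {a, b ! i} \<in> snd OPT"
    using setting.main[OF setting.intro[OF assms]] .

end
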